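(* Let $a$ be the unique positive real number with $\frac{1-\ln a}{a}=\frac1e$ (so $a\approx1.54$), and let $\psi_a(x)=1-(1-x)a^x$ for $x\in[0,1]$. Then $\psi_a$ is a convex, strictly increasing, three times differentiable bijection of $[0,1]$ onto $[0,1]$ with $\psi_a'>0$ on $[0,1]$, and it satisfies: (1) $x\psi_a'(x)/\psi_a(x)$ is strictly increasing on $(0,1]$; (2) $x\psi_a''(x)/\psi_a'(x)$ is strictly increasing on $(0,1]$; (3) $\psi_a(e^{-r/e})+\psi_a(re^{-r/e})\ge1$ for all $0\le r\le1$. *)

theory Defs
  imports "HOL-Analysis.Analysis"
begin

definition a_const :: real where
  "a_const = (THE a. a > 0 \<and> (1 - ln a) / a = 1 / exp 1)"

definition psi_a :: "real \<Rightarrow> real" where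
  "psi_a x = 1 - (1 - x) * a_const powr x"

end

theory Submission imports Defs begin

definition LL :: real where "LL = ln a_const"
definition pp :: "real \<Rightarrow> real" where "pp x = exp (LL*x) * (1 - LL + LL*x)"
definition qq :: "real \<Rightarrow> real" where "qq x = LL * exp (LL*x) * (2 - LL + LL*x)"

lemma uniq: "\<exists>!a::real. a > 0 \<and> (1 - ln a) / a = 1 / exp 1"
proof -
  define h where "h L = exp L - exp 1 * (1 - L)" for L :: real
  have e4: "exp (0.4::real) < 0.6 * exp 1"
  proof -
    have "1.3 \<le> exp (0.3::real)" using exp_ge_add_one_self[of "0.3::real"] by simp
    hence "1.3 * 1.3 \<le> exp (0.3::real) * exp 0.3" by (intro mult_mono) auto
    hence "1.69 \<le> exp (0.3::real) * exp 0.3" by simp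
    hence "1.69 \<le> exp (0.6::real)" by (simp add: mult_exp_exp)
    hence "1 < 0.6 * exp (0.6::real)" by simp
    hence "exp 0.4 < 0.6 * exp 0.6 * exp (0.4::real)" by simp
    also have "\<dots> = 0.6 * exp 1" by (simp add: mult_exp_exp)
    finally show ?thesis .
  qed
  have "h 0.4 \<le> 0" "0 \<le> h 1" using e4 by (auto simp: h_def)
  moreover have "continuous_on {0.4..1} h" unfolding h_def by (intro continuous_intros)
  ultimately obtain L where L: "0.4 \<le> L" "L \<le> 1" "h L = 0" using IVT'[of h "0.4" 0 1] by auto
  have ex: "exp L > 0 \<and> (1 - ln (exp L)) / exp L = 1 / exp 1"
    using L(3) by (auto simp: h_def field_simps)
  show ?thesis
  proof (rule ex1I[of _ "exp L"])
    show "exp L > 0 \<and> (1 - ln (exp L)) / exp L = 1 / exp 1" by (rule ex)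
  next
    fix a :: real assume a: "a > 0 \<and> (1 - ln a) / a = 1 / exp 1"
    hence "exp (ln a) = exp 1 * (1 - ln a)" by (auto simp: field_simps)
    moreover have "exp L = exp 1 * (1 - L)" using L(3) by (simp add: h_def)
    ultimately have "ln a = L"
      by (smt (verit, best) exp_gt_zero exp_less_cancel_iff mult_less_cancel_left_pos)
    thus "a = exp L" using a by auto
  qed
qed

lemma a_prop: "a_const > 0 \<and> (1 - ln a_const) / a_const = 1 / exp 1"
  unfolding a_const_def by (rule theI'[OF uniq])

lemma LL_eq: "exp LL = exp 1 * (1 - LL)" and a_eq: "a_const = exp LL"
  using a_prop unfolding LL_def by (auto simp: field_simps)

lemma LL_bounds: "0.4 < LL" "LL < 1"
proof -
  have e4: "exp (0.4::real) < 0.6 * exp 1"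
  proof -
    have "1.3 \<le> exp (0.3::real)" using exp_ge_add_one_self[of "0.3::real"] by simp
    hence "1.3 * 1.3 \<le> exp (0.3::real) * exp 0.3" by (intro mult_mono) auto
    hence "1.69 \<le> exp (0.3::real) * exp 0.3" by simp
    hence "1.69 \<le> exp (0.6::real)" by (simp add: mult_exp_exp)
    hence "1 < 0.6 * exp (0.6::real)" by simp
    hence "exp 0.4 < 0.6 * exp 0.6 * exp (0.4::real)" by simp
    also have "\<dots> = 0.6 * exp 1" by (simp add: mult_exp_exp)
    finally show ?thesis .
  qed
  show "LL < 1"
  proof (rule ccontr)
    assume "\<not> LL < 1"
    hence "exp 1 * (1 - LL) \<le> 0" by (simp add: mult_nonneg_nonpos)
    thus False using LL_eq by (smt (verit) exp_gt_zero)
  qed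
  show "0.4 < LL"
  proof (rule ccontr)
    assume "\<not> 0.4 < LL"
    hence "exp LL \<le> exp 0.4" "0.6 * exp 1 \<le> exp 1 * (1 - LL)" by auto
    thus False using LL_eq e4 by linarith
  qed
qed

lemma psi_eq: "psi_a x = 1 - (1 - x) * exp (LL * x)"
  using a_prop unfolding psi_a_def LL_def by (simp add: powr_def mult.commute)

lemma psi_fun: "psi_a = (\<lambda>x. 1 - (1 - x) * exp (LL * x))"
  using psi_eq by auto

lemma d1: "(psi_a has_real_derivative pp x) (at x)"
  unfolding psi_fun pp_def
  by (rule derivative_eq_intros refl | simp)+ (simp add: algebra_simps)

lemma d2: "(pp has_real_derivative qq x) (at x)"
  unfolding pp_def[abs_def] qq_def
  by (rule derivative_eq_intros refl | simp)+ (simp add: algebra_simps)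

lemma d3: "(qq has_real_derivative LL^2 * exp (LL*x) * (3 - LL + LL*x)) (at x)"
  unfolding qq_def[abs_def]
  by (rule derivative_eq_intros refl | simp)+ (simp add: algebra_simps power2_eq_square)

lemma deriv1: "deriv psi_a = pp" using d1 DERIV_imp_deriv by blast
lemma deriv2: "deriv pp = qq" using d2 DERIV_imp_deriv by blast

lemma pp_pos: "x \<ge> 0 \<Longrightarrow> pp x > 0"
  proof -
  assume "x \<ge> 0"
  hence "LL*x \<ge> 0" using LL_bounds by simp
  thus ?thesis unfolding pp_def using LL_bounds by (intro mult_pos_pos) auto
qed

lemma qq_pos: "x \<ge> 0 \<Longrightarrow> qq x > 0"
  proof -
  assume "x \<ge> 0"
  hence "LL*x \<ge> 0" using LL_bounds by simp
  thus ?thesis unfolding qq_def using LL_bounds by (intro mult_pos_pos) auto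
qed

lemma key: assumes "0 \<le> w" "w < z" shows "w * qq w * pp z < z * qq z * pp w"
proof -
  define c where "c = 1 - LL"
  have c: "c > 0" using LL_bounds by (simp add: c_def)
  have L: "LL > 0" using LL_bounds by simp
  have "z * qq z * pp w - w * qq w * pp z
     = LL * exp (LL*w) * exp (LL*z) * ((z - w) * (c*(1+c) + LL*c*(z+w) + LL^2*z*w))"
    unfolding pp_def qq_def c_def by (simp add: algebra_simps power2_eq_square)
  moreover have "c*(1+c) + LL*c*(z+w) + LL^2*z*w > 0"
    using c L assms by (intro add_pos_nonneg) (auto intro!: mult_nonneg_nonneg add_nonneg_nonneg)
  moreover have "LL * exp (LL*w) * exp (LL*z) > 0" using L by simp
  moreover have "z - w > 0" using assms by simp
  ultimately have "z * qq z * pp w - w * qq w * pp z > 0"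
    by (metis mult_pos_pos)
  thus ?thesis by simp
qed

lemma psi0: "psi_a 0 = 0" and psi1: "psi_a 1 = 1" by (simp_all add: psi_eq)

lemma psi_smono: "strict_mono_on {0..1} psi_a"
proof (rule strict_mono_onI)
  fix x y :: real assume "x \<in> {0..1}" "y \<in> {0..1}" "x < y"
  show "psi_a x < psi_a y"
  proof (rule DERIV_pos_imp_increasing[OF \<open>x < y\<close>])
    fix t assume "x \<le> t" "t \<le> y"
    hence "t \<ge> 0" using \<open>x \<in> {0..1}\<close> by auto
    thus "\<exists>d. DERIV psi_a t :> d \<and> d > 0" using d1[of t] pp_pos[of t] by blast
  qed
qed

lemma psi_pos: "0 < x \<Longrightarrow> x \<le> 1 \<Longrightarrow> psi_a x > 0"
  using strict_mono_onD[OF psi_smono, of 0 x] psi0 by auto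

lemma cont_all: "(\<And>x. (f has_real_derivative f' x) (at x)) \<Longrightarrow> continuous_on A f"
  by (meson DERIV_isCont continuous_at_imp_continuous_on)

lemma Npos: assumes "0 < z" "z \<le> 1"
  shows "(1 * pp z + z * qq z) * psi_a z - z * pp z * pp z > 0"
proof -
  define K where "K w = (pp z + z * qq z) * psi_a w - pp z * (w * pp w)" for w
  have dK: "(K has_real_derivative (z * qq z * pp w - w * qq w * pp z)) (at w)" for w
    unfolding K_def[abs_def]
    by (rule derivative_eq_intros d1 d2 refl | simp)+ (simp add: algebra_simps)
  have "K 0 < K z"
  proof (rule DERIV_pos_imp_increasing_open[OF assms(1)])
    fix w assume "0 < w" "w < z"
    thus "\<exists>y. DERIV K w :> y \<and> y > 0" using dK[of w] key[of w z]
      by (intro exI[of _ "z * qq z * pp w - w * qq w * pp z"]) simp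
  next
    show "continuous_on {0..z} K" using dK by (rule cont_all)
  qed
  thus ?thesis by (simp add: K_def psi0 algebra_simps)
qed

lemma part1: "strict_mono_on {0<..1} (\<lambda>x. x * pp x / psi_a x)"
proof (rule strict_mono_onI)
  fix x y :: real assume xy: "x \<in> {0<..1}" "y \<in> {0<..1}" "x < y"
  show "x * pp x / psi_a x < y * pp y / psi_a y"
  proof (rule DERIV_pos_imp_increasing[OF xy(3)])
    fix z assume z: "x \<le> z" "z \<le> y"
    hence z': "0 < z" "z \<le> 1" using xy by auto
    have "DERIV (\<lambda>x. x * pp x / psi_a x) z :>
       ((1 * pp z + z * qq z) * psi_a z - z * pp z * pp z) / (psi_a z * psi_a z)"
      using DERIV_divide[OF DERIV_mult[OF DERIV_ident d2] d1, of z] psi_pos[OF z'] by (simp add: algebra_simps)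
    moreover have "((1 * pp z + z * qq z) * psi_a z - z * pp z * pp z) / (psi_a z * psi_a z) > 0"
      using Npos[OF z'] psi_pos[OF z'] by simp
    ultimately show "\<exists>d. DERIV (\<lambda>x. x * pp x / psi_a x) z :> d \<and> d > 0" by blast
  qed
qed

lemma part2: "strict_mono_on {0<..1} (\<lambda>x. x * qq x / pp x)"
proof (rule strict_mono_onI)
  fix x y :: real assume xy: "x \<in> {0<..1}" "y \<in> {0<..1}" "x < y"
  have "x * qq x * pp y < y * qq y * pp x" using key[of x y] xy by auto
  thus "x * qq x / pp x < y * qq y / pp y"
    using pp_pos[of x] pp_pos[of y] xy by (simp add: divide_simps mult_ac)
qed

lemma e_gt: "exp 1 > (2.7::real)"
proof -
  have "\<bar>exp 1 - 5837465777 / 2147483648\<bar> \<le> (inverse(2 ^ 32)::real)" by (rule e_approx_32)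
  hence "exp 1 \<ge> 5837465777 / 2147483648 - (inverse(2 ^ 32)::real)" by linarith
  moreover have "5837465777 / 2147483648 - (inverse(2 ^ 32)::real) > 2.7" by simp
  ultimately show ?thesis by linarith
qed

lemma part3: assumes r: "0 \<le> r" "r \<le> 1"
  shows "psi_a (exp (- r / exp 1)) + psi_a (r * exp (- r / exp 1)) \<ge> 1"
proof -
  define G where "G t = psi_a (exp (- t / exp 1)) + psi_a (t * exp (- t / exp 1))" for t
  have L: "0.4 < LL" "LL < 1" by (rule LL_bounds)+
  have E: "exp 1 > (2.7::real)" by (rule e_gt)
  have "G 0 \<le> G r"
  proof (rule DERIV_nonneg_imp_nondecreasing[OF r(1)])
    fix t :: real assume t: "0 \<le> t" "t \<le> r"
    define s where "s = exp (- t / exp 1)"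
    define c where "c = 1 / exp (1::real)"
    have c: "0 < c" "c < 10/27" using E by (auto simp: c_def field_simps)
    have s_alt: "s = exp (- t * c)" by (simp add: s_def c_def)
    have ds: "((\<lambda>t. exp (- t / exp 1)) has_real_derivative s * (- c)) (at t)"
      unfolding s_def c_def by (rule derivative_eq_intros refl | simp)+
    have dts: "((\<lambda>t. t * exp (- t / exp 1)) has_real_derivative (s + t * (s * (- c)))) (at t)"
      using DERIV_mult[OF DERIV_ident ds] by (simp add: s_def algebra_simps)
    have dG: "(G has_real_derivative (pp s * (s * (-c)) + pp (t * s) * (s + t * (s * (- c))))) (at t)"
      unfolding G_def[abs_def]
      using DERIV_add[OF DERIV_chain2[OF d1 ds] DERIV_chain2[OF d1 dts]] by (simp add: s_def)
    have sp: "s > 0" by (simp add: s_def)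
    have s1: "s \<le> 1" using t r c by (simp add: s_alt)
    have sl: "s \<ge> 1 - t * c" using exp_ge_add_one_self[of "- t * c"] by (simp add: s_alt)
    have tc: "t * c \<le> c" using t r c by (simp add: mult_left_le_one_le mult_le_cancel_right1)
    have tc0: "t * c \<ge> 0" using t c by simp
    have A: "c * pp s \<le> 1 - LL"
    proof -
      have "exp (LL * s) \<le> exp LL" using L s1 by simp
      moreover have "1 - LL + LL * s \<le> 1" "0 \<le> 1 - LL + LL * s" using L s1 sp by (auto simp: mult_left_le_one_le)
      ultimately have "pp s \<le> exp LL * 1" unfolding pp_def by (intro mult_mono) auto
      also have "\<dots> = exp 1 * (1 - LL)" using LL_eq by simp
      finally show ?thesis using c by (simp add: c_def field_simps)
    qed
    define y where "y = t * s"
    have y: "y \<ge> t * (1 - t * c)" unfolding y_def using sl t by (simp add: mult_left_mono)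
    have "1 - t * c \<ge> 0" using tc c by linarith
    hence y0: "t * (1 - t * c) \<ge> 0" using t by simp
    have "pp y \<ge> (1 + LL * y) * (1 - LL + LL * y)"
    proof -
      have "0 \<le> y" using y y0 by linarith
      hence "0 \<le> LL * y" using L by simp
      hence "0 \<le> 1 - LL + LL * y" using L by linarith
      thus ?thesis unfolding pp_def using exp_ge_add_one_self[of "LL*y"] by (intro mult_right_mono) auto
    qed
    also have "(1 + LL * y) * (1 - LL + LL * y) \<ge> 1 - LL + LL * (2 - LL) * y"
    proof -
      have "(1 + LL * y) * (1 - LL + LL * y) = 1 - LL + LL * (2 - LL) * y + (LL*y)^2"
        by (simp add: algebra_simps power2_eq_square)
      thus ?thesis by simp
    qed
    finally have py0: "pp y \<ge> 1 - LL + LL * (2 - LL) * y" .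
    have "LL * (2 - LL) \<ge> 0" using L by simp
    hence "LL * (2 - LL) * y \<ge> LL * (2 - LL) * (t * (1 - t * c))" by (rule mult_left_mono[OF y])
    hence py: "pp y \<ge> 1 - LL + LL * (2 - LL) * (t * (1 - t * c))" using py0 by linarith
    have "LL * (2 - LL) - 0.64 = (LL - 0.4) * (1.6 - LL)" by (simp add: algebra_simps field_simps)
    moreover have "(LL - 0.4) * (1.6 - LL) > 0" using L by simp
    ultimately have LL2: "LL * (2 - LL) \<ge> 0.64" by linarith
    have q1: "1 - t * c \<ge> 17/27" using tc c by linarith
    have q2: "(1 - t * c) * (1 - t * c) \<ge> (17/27) * (17/27)" using q1 by (intro mult_mono) auto
    have q3: "LL * (2 - LL) * ((1 - t * c) * (1 - t * c)) \<ge> 0.64 * ((17/27) * (17/27))"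
      by (rule mult_mono[OF LL2 q2]) (use L in auto)
    have q4: "c * (1 - LL) \<le> 10/27 * 0.6" using c L by (intro mult_mono) auto
    have q5: "LL * (2 - LL) * ((1 - t * c) * (1 - t * c)) - c * (1 - LL) \<ge> 0" using q3 q4 by simp
    have "(1 - t * c) * pp y - (1 - LL) \<ge> (1 - t * c) * (1 - LL + LL * (2 - LL) * (t * (1 - t * c))) - (1 - LL)"
      using py q1 by (simp add: mult_left_mono)
    also have "(1 - t * c) * (1 - LL + LL * (2 - LL) * (t * (1 - t * c))) - (1 - LL)
       = t * (LL * (2 - LL) * ((1 - t * c) * (1 - t * c)) - c * (1 - LL))"
      by (simp add: algebra_simps)
    also have "\<dots> \<ge> 0" using q5 t by simp
    finally have B: "(1 - t * c) * pp y \<ge> 1 - LL" by simp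
    have "pp s * (s * (-c)) + pp (t * s) * (s + t * (s * (- c))) = s * ((1 - t * c) * pp y - c * pp s)"
      by (simp add: y_def algebra_simps)
    also have "\<dots> \<ge> 0" using A B sp by simp
    finally show "\<exists>d. DERIV G t :> d \<and> d \<ge> 0" using dG by blast
  qed
  moreover have "G 0 = 1" by (simp add: G_def psi0 psi1)
  ultimately show ?thesis by (simp add: G_def)
qed

lemma convex_part: "convex_on {0..1} psi_a"
  by (rule f''_ge0_imp_convex[where f'=pp and f''=qq]) (auto intro: d1 d2 less_imp_le[OF qq_pos])

lemma bij_part: "bij_betw psi_a {0..1} {0..1}"
proof -
  have inj: "inj_on psi_a {0..1}" by (rule strict_mono_on_imp_inj_on[OF psi_smono])
  have cont: "continuous_on {0..1} psi_a" using d1 by (rule cont_all)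
  have "psi_a ` {0..1} = {0..1}"
  proof
    show "psi_a ` {0..1} \<subseteq> {0..1}"
    proof
      fix y assume "y \<in> psi_a ` {0..1}"
      then obtain x where x: "x \<in> {0..1}" "y = psi_a x" by auto
      have "psi_a 0 \<le> psi_a x" "psi_a x \<le> psi_a 1"
        using x psi_smono by (auto simp: strict_mono_on_leD)
      thus "y \<in> {0..1}" using x psi0 psi1 by auto
    qed
  next
    show "{0..1} \<subseteq> psi_a ` {0..1}"
    proof
      fix y :: real assume "y \<in> {0..1}"
      then obtain x where "0 \<le> x" "x \<le> 1" "psi_a x = y"
        using IVT'[of psi_a 0 y 1] cont psi0 psi1 by auto
      thus "y \<in> psi_a ` {0..1}" by force
    qed
  qed
  thus ?thesis using inj by (simp add: bij_betw_def)
qed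

theorem lemma4p2:
  shows "(\<exists>!a::real. a > 0 \<and> (1 - ln a) / a = 1 / exp 1)
    \<and> convex_on {0..1} psi_a
    \<and> strict_mono_on {0..1} psi_a
    \<and> (\<forall>x\<in>{0..1}. psi_a differentiable (at x)
         \<and> deriv psi_a differentiable (at x)
         \<and> deriv (deriv psi_a) differentiable (at x))
    \<and> bij_betw psi_a {0..1} {0..1}
    \<and> (\<forall>x\<in>{0..1}. deriv psi_a x > 0)
    \<and> strict_mono_on {0<..1} (\<lambda>x. x * deriv psi_a x / psi_a x)
    \<and> strict_mono_on {0<..1} (\<lambda>x. x * deriv (deriv psi_a) x / deriv psi_a x)
    \<and> (\<forall>r\<in>{0..1}. psi_a (exp (- r / exp 1)) + psi_a (r * exp (- r / exp 1)) \<ge> 1)"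
proof (intro conjI ballI)
  show "\<exists>!a::real. a > 0 \<and> (1 - ln a) / a = 1 / exp 1" by (rule uniq)
  show "convex_on {0..1} psi_a" by (rule convex_part)
  show "strict_mono_on {0..1} psi_a" by (rule psi_smono)
  show "bij_betw psi_a {0..1} {0..1}" by (rule bij_part)
  fix x :: real
  show "psi_a differentiable (at x)" using d1 real_differentiable_def by blast
  show "deriv psi_a differentiable (at x)" unfolding deriv1 using d2 real_differentiable_def by blast
  show "deriv (deriv psi_a) differentiable (at x)" unfolding deriv1 deriv2 using d3 real_differentiable_def by blast
next
  fix x :: real assume "x \<in> {0..1}"
  thus "deriv psi_a x > 0" unfolding deriv1 by (intro pp_pos) auto
next
  show "strict_mono_on {0<..1} (\<lambda>x. x * deriv psi_a x / psi_a x)" unfolding deriv1 by (rule part1)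
  show "strict_mono_on {0<..1} (\<lambda>x. x * deriv (deriv psi_a) x / deriv psi_a x)"
    unfolding deriv1 deriv2 by (rule part2)
next
  fix r :: real assume "r \<in> {0..1}"
  thus "psi_a (exp (- r / exp 1)) + psi_a (r * exp (- r / exp 1)) \<ge> 1" by (intro part3) auto
qed

end
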